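(* Let $\mathbb{F}\subseteq\mathbb{C}$ be a subfield closed under complex conjugation, $m\ge2$, $N\ge1$, and let $\zeta_1,\dots,\zeta_{m-1}\in\mathcal{P}_N^-[\mathbb{F}]$. Let $\mathbf{u}(z)=(u_1(z),\dots,u_{m-1}(z),\widetilde{u_m}(z))^T$ and $\mathbf{v}(z)=(v_1(z),\dots,v_{m-1}(z),\widetilde{v_m}(z))^T$, with all $u_i,v_i\in\mathcal{P}_N^+[\mathbb{F}]$, be two (possibly equal) solutions of the system $(\mathcal{S})$. Then $$\sum_{i=1}^{m-1}u_i(z)\widetilde{v_i}(z)+\widetilde{u_m}(z)v_m(z)$$ is constant on $\mathbb{C}\setminus\{0\}$.
   Context: For a Laurent polynomial $p(z)=\sum_k c_kz^k$ write $\widetilde{p}(z)=\sum_k\overline{c_k}z^{-k}$. $\mathcal{P}_N^+[\mathbb{F}]=\{\sum_{k=0}^Nc_kz^k: c_k\in\mathbb{F}\}$, $\mathcal{P}_N^-[\mathbb{F}]=\{\sum_{k=1}^Nc_kz^{-k}: c_k\in\mathbb{F}\}$. Let $\mathcal{P}^+$ denote the set of polynomials in $z$ (Laurent polynomials with no negative powers). The system $(\mathcal{S})$ in unknowns $x_1,\dots,x_m$ is $$\zeta_i(z)x_m(z)-\widetilde{x_i}(z)\in\mathcal{P}^+\ (i=1,\dots,m-1),\qquad \sum_{i=1}^{m-1}\zeta_i(z)x_i(z)+\widetilde{x_m}(z)\in\mathcal{P}^+.$$ A vector $(u_1,\dots,u_{m-1},\widetilde{u_m})^T$ with $u_i\in\mathcal{P}_N^+[\mathbb{F}]$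 is called a solution of $(\mathcal{S})$ if all these conditions hold with $x_i=u_i$, $i=1,\dots,m$. *)

theory Defs
  imports Complex_Main
begin

text \<open>Laurent polynomials with complex coefficients, represented by their coefficient
  function (coefficient of z^k at index k); genuine Laurent polynomials have finite support.\<close>

type_synonym lpoly = "int \<Rightarrow> complex"

definition lsupp :: "lpoly \<Rightarrow> int set" where
  "lsupp p = {k. p k \<noteq> 0}"

definition is_lpoly :: "lpoly \<Rightarrow> bool" where
  "is_lpoly p \<longleftrightarrow> finite (lsupp p)"

definition lmult :: "lpoly \<Rightarrow> lpoly \<Rightarrow> lpoly" where
  "lmult p q = (\<lambda>n. \<Sum>k\<in>lsupp p. p k * q (n - k))"

definition ltilde :: "lpoly \<Rightarrow> lpoly" where
  "ltilde p = (\<lambda>k. cnj (p (- k)))"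

definition leval :: "lpoly \<Rightarrow> complex \<Rightarrow> complex" where
  "leval p z = (\<Sum>k\<in>lsupp p. p k * z powi k)"

definition in_Pplus :: "lpoly \<Rightarrow> bool" where
  "in_Pplus p \<longleftrightarrow> (\<forall>k<0. p k = 0)"

definition PplusN :: "complex set \<Rightarrow> nat \<Rightarrow> lpoly set" where
  "PplusN F N = {p. (\<forall>k. p k \<in> F) \<and> (\<forall>k. (k < 0 \<or> k > int N) \<longrightarrow> p k = 0)}"

definition PminusN :: "complex set \<Rightarrow> nat \<Rightarrow> lpoly set" where
  "PminusN F N = {p. (\<forall>k. p k \<in> F) \<and> (\<forall>k. (k \<ge> 0 \<or> k < - int N) \<longrightarrow> p k = 0)}"

definition conj_closed_subfield :: "complex set \<Rightarrow> bool" where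
  "conj_closed_subfield F \<longleftrightarrow>
     0 \<in> F \<and> 1 \<in> F \<and>
     (\<forall>a\<in>F. \<forall>b\<in>F. a + b \<in> F \<and> a * b \<in> F) \<and>
     (\<forall>a\<in>F. - a \<in> F) \<and> (\<forall>a\<in>F. a \<noteq> 0 \<longrightarrow> inverse a \<in> F) \<and>
     (\<forall>a\<in>F. cnj a \<in> F)"

text \<open>The vector (u_1,...,u_{m-1}, tilde u_m) with u_i in P_N^+[F] is a solution of (S)
  (with coefficients zeta_1..zeta_{m-1}); u is indexed by 1..m.\<close>
definition is_solution_S ::
    "complex set \<Rightarrow> nat \<Rightarrow> nat \<Rightarrow> (nat \<Rightarrow> lpoly) \<Rightarrow> (nat \<Rightarrow> lpoly) \<Rightarrow> bool" where
  "is_solution_S F N m \<zeta> u \<longleftrightarrow>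
     (\<forall>i\<in>{1..m}. u i \<in> PplusN F N) \<and>
     (\<forall>i\<in>{1..m-1}. in_Pplus (\<lambda>k. lmult (\<zeta> i) (u m) k - ltilde (u i) k)) \<and>
     in_Pplus (\<lambda>k. (\<Sum>i=1..m-1. lmult (\<zeta> i) (u i) k) + ltilde (u m) k)"

end

theory Submission imports Defs begin

lemma leval_superset:
  assumes "finite A" "lsupp p \<subseteq> A"
  shows "leval p z = (\<Sum>k\<in>A. p k * z powi k)"
  unfolding leval_def
  by (rule sum.mono_neutral_left) (use assms in \<open>auto simp: lsupp_def\<close>)

lemma lmult_superset:
  assumes "finite A" "lsupp p \<subseteq> A"
  shows "lmult p q n = (\<Sum>k\<in>A. p k * q (n - k))"
  unfolding lmult_def
  by (rule sum.mono_neutral_left) (use assms in \<open>auto simp: lsupp_def\<close>)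

lemma lsupp_lmult:
  "lsupp (lmult p q) \<subseteq> (\<lambda>(a,b). a + b) ` (lsupp p \<times> lsupp q)"
proof
  fix n assume "n \<in> lsupp (lmult p q)"
  then have "(\<Sum>k\<in>lsupp p. p k * q (n - k)) \<noteq> 0" by (simp add: lsupp_def lmult_def)
  then obtain k where "k \<in> lsupp p" "p k * q (n - k) \<noteq> 0" by (meson sum.neutral)
  then have "k \<in> lsupp p" "n - k \<in> lsupp q" by (auto simp: lsupp_def)
  then show "n \<in> (\<lambda>(a,b). a + b) ` (lsupp p \<times> lsupp q)"
    by (intro image_eqI[where x="(k, n-k)"]) auto
qed

lemma is_lpoly_lmult: "is_lpoly p \<Longrightarrow> is_lpoly q \<Longrightarrow> is_lpoly (lmult p q)"
  unfolding is_lpoly_def using lsupp_lmult by (meson finite_SigmaI finite_imageI finite_subset)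

lemma is_lpoly_add: "is_lpoly p \<Longrightarrow> is_lpoly q \<Longrightarrow> is_lpoly (\<lambda>k. p k + q k)"
  unfolding is_lpoly_def lsupp_def
  by (rule finite_subset[of _ "{k. p k \<noteq> 0} \<union> {k. q k \<noteq> 0}"]) auto

lemma is_lpoly_diff: "is_lpoly p \<Longrightarrow> is_lpoly q \<Longrightarrow> is_lpoly (\<lambda>k. p k - q k)"
  unfolding is_lpoly_def lsupp_def
  by (rule finite_subset[of _ "{k. p k \<noteq> 0} \<union> {k. q k \<noteq> 0}"]) auto

lemma is_lpoly_sum: "finite I \<Longrightarrow> (\<And>i. i \<in> I \<Longrightarrow> is_lpoly (f i)) \<Longrightarrow> is_lpoly (\<lambda>k. \<Sum>i\<in>I. f i k)"
proof (induction I rule: finite_induct)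
  case empty then show ?case by (simp add: is_lpoly_def lsupp_def)
next
  case (insert x F)
  then show ?case using is_lpoly_add[of "f x" "\<lambda>k. \<Sum>i\<in>F. f i k"] by simp
qed

lemma is_lpoly_tilde: "is_lpoly p \<Longrightarrow> is_lpoly (ltilde p)"
proof -
  assume "is_lpoly p"
  have "lsupp (ltilde p) = uminus ` lsupp p"
    by (auto simp: lsupp_def ltilde_def image_iff intro!: exI[where x="- _"])
  then show ?thesis using \<open>is_lpoly p\<close> by (simp add: is_lpoly_def)
qed

lemma leval_add: "is_lpoly p \<Longrightarrow> is_lpoly q \<Longrightarrow> leval (\<lambda>k. p k + q k) z = leval p z + leval q z"
proof -
  assume a: "is_lpoly p" "is_lpoly q"
  let ?A = "lsupp p \<union> lsupp q"
  have f: "finite ?A" using a by (simp add: is_lpoly_def)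
  have "leval (\<lambda>k. p k + q k) z = (\<Sum>k\<in>?A. (p k + q k) * z powi k)"
    by (rule leval_superset[OF f]) (auto simp: lsupp_def)
  also have "\<dots> = (\<Sum>k\<in>?A. p k * z powi k) + (\<Sum>k\<in>?A. q k * z powi k)"
    by (simp add: distrib_right sum.distrib)
  also have "\<dots> = leval p z + leval q z"
    using leval_superset[OF f, of p z] leval_superset[OF f, of q z] by auto
  finally show ?thesis .
qed

lemma leval_diff: "is_lpoly p \<Longrightarrow> is_lpoly q \<Longrightarrow> leval (\<lambda>k. p k - q k) z = leval p z - leval q z"
proof -
  assume a: "is_lpoly p" "is_lpoly q"
  let ?A = "lsupp p \<union> lsupp q"
  have f: "finite ?A" using a by (simp add: is_lpoly_def)
  have "leval (\<lambda>k. p k - q k) z = (\<Sum>k\<in>?A. (p k - q k) * z powi k)"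
    by (rule leval_superset[OF f]) (auto simp: lsupp_def)
  also have "\<dots> = (\<Sum>k\<in>?A. p k * z powi k) - (\<Sum>k\<in>?A. q k * z powi k)"
    by (simp add: left_diff_distrib sum_subtractf)
  also have "\<dots> = leval p z - leval q z"
    using leval_superset[OF f, of p z] leval_superset[OF f, of q z] by auto
  finally show ?thesis .
qed

lemma leval_sum: "finite I \<Longrightarrow> (\<And>i. i \<in> I \<Longrightarrow> is_lpoly (f i)) \<Longrightarrow>
   leval (\<lambda>k. \<Sum>i\<in>I. f i k) z = (\<Sum>i\<in>I. leval (f i) z)"
proof (induction I rule: finite_induct)
  case empty then show ?case by (simp add: leval_def lsupp_def)
next
  case (insert x F)
  then show ?case using leval_add[of "f x" "\<lambda>k. \<Sum>i\<in>F. f i k"] is_lpoly_sum[of F f] by simp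
qed

lemma leval_tilde:
  assumes "z \<noteq> 0"
  shows "leval (ltilde p) z = cnj (leval p (inverse (cnj z)))"
proof -
  have s: "lsupp (ltilde p) = uminus ` lsupp p"
    by (auto simp: lsupp_def ltilde_def image_iff intro!: exI[where x="- _"])
  have "leval (ltilde p) z = (\<Sum>k\<in>uminus ` lsupp p. cnj (p (-k)) * z powi k)"
    unfolding leval_def s by (simp add: ltilde_def)
  also have "\<dots> = (\<Sum>k\<in>lsupp p. cnj (p k) * z powi (-k))"
    by (subst sum.reindex) (auto simp: inj_on_def)
  also have "\<dots> = cnj (leval p (inverse (cnj z)))"
    by (simp add: leval_def power_int_minus power_int_inverse)
  finally show ?thesis .
qed

lemma ltilde_ltilde[simp]: "ltilde (ltilde p) = p"
  by (simp add: ltilde_def)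


lemma leval_mult:
  assumes p: "is_lpoly p" and q: "is_lpoly q" and z: "z \<noteq> 0"
  shows "leval (lmult p q) z = leval p z * leval q z"
proof -
  define A where "A = lsupp p"
  define B where "B = lsupp q"
  define C where "C = (\<lambda>(a,b). a + b) ` (A \<times> B)"
  have fA: "finite A" and fB: "finite B" using p q by (auto simp: is_lpoly_def A_def B_def)
  have fC: "finite C" using fA fB by (simp add: C_def)
  have "leval (lmult p q) z = (\<Sum>n\<in>C. lmult p q n * z powi n)"
    by (rule leval_superset[OF fC]) (use lsupp_lmult in \<open>auto simp: C_def A_def B_def\<close>)
  also have "\<dots> = (\<Sum>n\<in>C. \<Sum>k\<in>A. p k * q (n - k) * z powi n)"
    by (simp add: lmult_def A_def sum_distrib_right)
  also have "\<dots> = (\<Sum>k\<in>A. \<Sum>n\<in>C. p k * q (n - k) * z powi n)"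
    by (rule sum.swap)
  also have "\<dots> = (\<Sum>k\<in>A. p k * z powi k * leval q z)"
  proof (rule sum.cong[OF refl])
    fix k assume k: "k \<in> A"
    have "(\<Sum>n\<in>C. p k * q (n - k) * z powi n) = p k * z powi k * (\<Sum>n\<in>C. q (n - k) * z powi (n - k))"
      by (simp add: sum_distrib_left z power_int_diff field_simps)
    also have "(\<Sum>n\<in>C. q (n - k) * z powi (n - k)) = (\<Sum>j\<in>(\<lambda>n. n - k) ` C. q j * z powi j)"
      by (subst sum.reindex) (auto simp: inj_on_def)
    also have "\<dots> = leval q z"
    proof (rule leval_superset[symmetric])
      show "finite ((\<lambda>n. n - k) ` C)" using fC by simp
      show "lsupp q \<subseteq> (\<lambda>n. n - k) ` C"
      proof
        fix j assume "j \<in> lsupp q"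
        then have "k + j \<in> C" using k by (force simp: C_def B_def)
        then show "j \<in> (\<lambda>n. n - k) ` C" by (intro image_eqI[where x="k+j"]) auto
      qed
    qed
    finally show "(\<Sum>n\<in>C. p k * q (n - k) * z powi n) = p k * z powi k * leval q z" .
  qed
  also have "\<dots> = leval p z * leval q z"
    by (simp add: leval_def A_def sum_distrib_right)
  finally show ?thesis .
qed

lemma in_Pplus_lmult: "in_Pplus p \<Longrightarrow> in_Pplus q \<Longrightarrow> in_Pplus (lmult p q)"
  unfolding in_Pplus_def lmult_def
proof (intro allI impI)
  fix n :: int assume p: "\<forall>k<0. p k = 0" and q: "\<forall>k<0. q k = 0" and n: "n < 0"
  show "(\<Sum>k\<in>lsupp p. p k * q (n - k)) = 0"
  proof (rule sum.neutral, rule ballI)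
    fix k assume "k \<in> lsupp p"
    then have "k \<ge> 0" using p by (force simp: lsupp_def)
    then show "p k * q (n - k) = 0" using q n by simp
  qed
qed

lemma lpoly_unique0:
  assumes p: "is_lpoly p" and h: "\<forall>z. z \<noteq> 0 \<longrightarrow> leval p z = 0"
  shows "p k = 0"
proof -
  obtain R :: nat where R: "lsupp p \<subseteq> {-int R..int R}"
  proof -
    have "finite (abs ` lsupp p)" using p by (simp add: is_lpoly_def)
    then obtain M where "\<forall>x\<in>abs ` lsupp p. x \<le> M" using finite_nat_set_iff_bounded_le
      by (meson bdd_above_def bdd_above_finite bdd_above_Int1) 
    then have "lsupp p \<subseteq> {-int (nat M)..int (nat M)}" by force
    then show ?thesis using that by blast
  qed
  define c where "c = (\<lambda>j::nat. p (int j - int R))"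
  have eq: "(\<Sum>j\<le>2*R. c j * z ^ j) = leval p z * z ^ R" if z: "z \<noteq> 0" for z
  proof -
    have "leval p z * z ^ R = (\<Sum>k\<in>{-int R..int R}. p k * z powi (k + int R))"
      by (simp add: leval_superset[OF _ R] sum_distrib_right z power_int_add mult.assoc)
    also have "\<dots> = (\<Sum>j\<in>(\<lambda>j. int j - int R) ` {..2*R}. p j * z powi (j + int R))"
    proof (rule sum.cong)
      show "{- int R..int R} = (\<lambda>j. int j - int R) ` {..2 * R}"
      proof
        show "{- int R..int R} \<subseteq> (\<lambda>j. int j - int R) ` {..2 * R}"
        proof
          fix k assume "k \<in> {- int R..int R}"
          then show "k \<in> (\<lambda>j. int j - int R) ` {..2 * R}"
            by (intro image_eqI[where x="nat (k + int R)"]) auto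
        qed
      qed auto
    qed simp
    also have "\<dots> = (\<Sum>j\<le>2*R. c j * z ^ j)"
      by (subst sum.reindex) (auto simp: inj_on_def c_def)
    finally show ?thesis by simp
  qed
  have "\<not> finite {z. (\<Sum>j\<le>2*R. c j * z ^ j) = 0}"
  proof
    assume "finite {z. (\<Sum>j\<le>2*R. c j * z ^ j) = 0}"
    moreover have "UNIV - {0} \<subseteq> {z. (\<Sum>j\<le>2*R. c j * z ^ j) = 0}"
      using eq h by auto
    ultimately have "finite (UNIV - {0::complex})" by (rule finite_subset[rotated])
    then show False by (simp add: infinite_UNIV_char_0)
  qed
  then have c0: "\<forall>j\<le>2*R. c j = 0" using polyfun_finite_roots by blast
  show "p k = 0"
  proof (cases "k \<in> lsupp p")
    case True
    then have "k \<in> {-int R..int R}" using R by auto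
    then have "p k = c (nat (k + int R))" by (simp add: c_def)
    also have "\<dots> = 0" using c0 \<open>k \<in> {-int R..int R}\<close> by auto
    finally show ?thesis .
  qed (simp add: lsupp_def)
qed


lemma PplusN_lpoly: "p \<in> PplusN F N \<Longrightarrow> is_lpoly p \<and> in_Pplus p"
proof -
  assume "p \<in> PplusN F N"
  then have "{k. p k \<noteq> 0} \<subseteq> {0..int N}" "\<forall>k<0. p k = 0"
    unfolding PplusN_def by force+
  then show ?thesis unfolding is_lpoly_def in_Pplus_def lsupp_def
    using finite_subset by blast
qed

lemma PminusN_lpoly: "p \<in> PminusN F N \<Longrightarrow> is_lpoly p"
proof -
  assume "p \<in> PminusN F N"
  have "{k. p k \<noteq> 0} \<subseteq> {-int N..0}"
  proof
    fix k assume "k \<in> {k. p k \<noteq> 0}"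
    with \<open>p \<in> PminusN F N\<close> show "k \<in> {-int N..0}"
      unfolding PminusN_def by (cases "0 \<le> k"; cases "k < -int N") auto
  qed
  then show ?thesis unfolding is_lpoly_def lsupp_def
    using finite_subset by blast
qed

lemma key:
  assumes m1: "m \<ge> 1" and zeta: "\<forall>i\<in>{1..m-1}. \<zeta> i \<in> PminusN F N"
    and su: "is_solution_S F N m \<zeta> u" and sv: "is_solution_S F N m \<zeta> v"
  shows "\<exists>a. is_lpoly a \<and> in_Pplus a \<and> (\<forall>z. z \<noteq> 0 \<longrightarrow>
           (\<Sum>i=1..m-1. leval (u i) z * leval (ltilde (v i)) z)
             + leval (ltilde (u m)) z * leval (v m) z = leval a z)"
proof -
  have uP: "is_lpoly (u i) \<and> in_Pplus (u i)" if "i \<in> {1..m}" for i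
  proof -
    have "u i \<in> PplusN F N" using su that by (auto simp: is_solution_S_def)
    then show ?thesis by (rule PplusN_lpoly)
  qed
  have vP: "is_lpoly (v i) \<and> in_Pplus (v i)" if "i \<in> {1..m}" for i
  proof -
    have "v i \<in> PplusN F N" using sv that by (auto simp: is_solution_S_def)
    then show ?thesis by (rule PplusN_lpoly)
  qed
  have zl: "is_lpoly (\<zeta> i)" if "i \<in> {1..m-1}" for i
    using zeta that by (meson PminusN_lpoly)
  have I: "i \<in> {1..m}" if "i \<in> {1..m-1}" for i using that by auto
  have mm: "m \<in> {1..m}" if "i \<in> {1..m-1}" for i using that by auto
  have umP: "is_lpoly (u m)" using uP[of m] m1 by auto
  have vmP: "is_lpoly (v m)" "in_Pplus (v m)" using vP[of m] m1 by auto
  define P where "P i = (\<lambda>k. lmult (\<zeta> i) (v m) k - ltilde (v i) k)" for i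
  define Q where "Q = (\<lambda>k. (\<Sum>i=1..m-1. lmult (\<zeta> i) (u i) k) + ltilde (u m) k)"
  define a where "a = (\<lambda>k. lmult Q (v m) k - (\<Sum>i=1..m-1. lmult (u i) (P i) k))"
  have Pp: "in_Pplus (P i)" if "i \<in> {1..m-1}" for i
    using sv that by (auto simp: is_solution_S_def P_def)
  have Qp: "in_Pplus Q" using su by (auto simp: is_solution_S_def Q_def)
  have Pl: "is_lpoly (P i)" if "i \<in> {1..m-1}" for i
    unfolding P_def using that zl vP mm I
    by (intro is_lpoly_diff is_lpoly_lmult is_lpoly_tilde) auto
  have Ql: "is_lpoly Q"
    unfolding Q_def using zl uP I umP
    by (intro is_lpoly_add is_lpoly_sum is_lpoly_lmult is_lpoly_tilde) auto
  have lsum: "is_lpoly (\<lambda>k. \<Sum>i=1..m-1. lmult (u i) (P i) k)"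
    using uP Pl I by (intro is_lpoly_sum is_lpoly_lmult) auto
  have al: "is_lpoly a" unfolding a_def
    using Ql vmP lsum by (intro is_lpoly_diff is_lpoly_lmult) auto
  have ap: "in_Pplus a"
  proof -
    have "in_Pplus (lmult Q (v m))" using Qp vmP in_Pplus_lmult by blast
    moreover have "in_Pplus (lmult (u i) (P i))" if "i \<in> {1..m-1}" for i
      using in_Pplus_lmult uP Pp that I by blast
    ultimately show ?thesis
      by (auto simp: a_def in_Pplus_def)
  qed
  have ev: "(\<Sum>i=1..m-1. leval (u i) z * leval (ltilde (v i)) z)
             + leval (ltilde (u m)) z * leval (v m) z = leval a z" if z: "z \<noteq> 0" for z
  proof -
    have eP: "leval (P i) z = leval (\<zeta> i) z * leval (v m) z - leval (ltilde (v i)) z"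
      if "i \<in> {1..m-1}" for i
      unfolding P_def using that zl vmP vP I z
      by (subst leval_diff) (auto intro: is_lpoly_lmult is_lpoly_tilde simp: leval_mult)
    have eQ: "leval Q z = (\<Sum>i=1..m-1. leval (\<zeta> i) z * leval (u i) z) + leval (ltilde (u m)) z"
    proof -
      have "leval (\<lambda>k. \<Sum>i = 1..m - 1. lmult (\<zeta> i) (u i) k) z =
        (\<Sum>i = 1..m - 1. leval (lmult (\<zeta> i) (u i)) z)"
        using zl uP I by (intro leval_sum) (auto intro!: is_lpoly_lmult)
      also have "\<dots> = (\<Sum>i = 1..m - 1. leval (\<zeta> i) z * leval (u i) z)"
        using zl uP I z by (intro sum.cong refl leval_mult) auto
      finally show ?thesis
      unfolding Q_def using zl uP I z umP
      by (subst leval_add) (auto intro!: is_lpoly_sum is_lpoly_lmult is_lpoly_tilde)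
    qed
    have "leval a z = leval Q z * leval (v m) z - (\<Sum>i=1..m-1. leval (u i) z * leval (P i) z)"
    proof -
      have "leval (\<lambda>k. \<Sum>i = 1..m - 1. lmult (u i) (P i) k) z =
        (\<Sum>i = 1..m - 1. leval (lmult (u i) (P i)) z)"
        using Pl uP I by (intro leval_sum) (auto intro!: is_lpoly_lmult)
      also have "\<dots> = (\<Sum>i = 1..m - 1. leval (u i) z * leval (P i) z)"
        using Pl uP I z by (intro sum.cong refl leval_mult) auto
      finally show ?thesis
      unfolding a_def using Ql vmP lsum uP Pl I z
      by (subst leval_diff) (auto intro!: is_lpoly_lmult simp: leval_mult)
    qed
    also have "\<dots> = leval Q z * leval (v m) z - (\<Sum>i=1..m-1. leval (u i) z *
        (leval (\<zeta> i) z * leval (v m) z - leval (ltilde (v i)) z))"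
      using eP by simp
    also have "\<dots> = (\<Sum>i=1..m-1. leval (u i) z * leval (ltilde (v i)) z)
             + leval (ltilde (u m)) z * leval (v m) z"
      unfolding eQ by (simp add: algebra_simps sum_subtractf sum_distrib_right sum_distrib_left)
    finally show ?thesis by simp
  qed
  show ?thesis using al ap ev by blast
qed


theorem lemma3:
  fixes F :: "complex set" and m N :: nat
    and \<zeta> u v :: "nat \<Rightarrow> lpoly"
  assumes "conj_closed_subfield F"
    and "m \<ge> 2" and "N \<ge> 1"
    and "\<forall>i\<in>{1..m-1}. \<zeta> i \<in> PminusN F N"
    and "is_solution_S F N m \<zeta> u"
    and "is_solution_S F N m \<zeta> v"
  shows "\<exists>c. \<forall>z::complex. z \<noteq> 0 \<longrightarrow>
           (\<Sum>i=1..m-1. leval (u i) z * leval (ltilde (v i)) z)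
             + leval (ltilde (u m)) z * leval (v m) z = c"
proof -
  have m1: "m \<ge> 1" using assms(2) by simp
  obtain a where a: "is_lpoly a" "in_Pplus a" and ea: "\<And>z. z \<noteq> 0 \<Longrightarrow>
           (\<Sum>i=1..m-1. leval (u i) z * leval (ltilde (v i)) z)
             + leval (ltilde (u m)) z * leval (v m) z = leval a z"
    using key[OF m1 assms(4,5,6)] by blast
  obtain b where b: "is_lpoly b" "in_Pplus b" and eb: "\<And>z. z \<noteq> 0 \<Longrightarrow>
           (\<Sum>i=1..m-1. leval (v i) z * leval (ltilde (u i)) z)
             + leval (ltilde (v m)) z * leval (u m) z = leval b z"
    using key[OF m1 assms(4,6,5)] by blast
  have tl: "leval p z = cnj (leval (ltilde p) (inverse (cnj z)))" if "z \<noteq> 0" for p z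
    using leval_tilde[OF that, of "ltilde p"] by simp
  have eqab: "leval a z = leval (ltilde b) z" if z: "z \<noteq> 0" for z
  proof -
    define w where "w = inverse (cnj z)"
    have w: "w \<noteq> 0" using z by (simp add: w_def)
    have "leval a z = (\<Sum>i=1..m-1. leval (u i) z * leval (ltilde (v i)) z)
             + leval (ltilde (u m)) z * leval (v m) z" using ea z by simp
    also have "\<dots> = cnj ((\<Sum>i=1..m-1. leval (v i) w * leval (ltilde (u i)) w)
             + leval (ltilde (v m)) w * leval (u m) w)"
      by (simp add: tl[OF z] leval_tilde[OF z] w_def mult.commute)
    also have "\<dots> = cnj (leval b w)" using eb w by simp
    also have "\<dots> = leval (ltilde b) z" by (simp add: leval_tilde[OF z] w_def)
    finally show ?thesis .
  qed
  define d where "d = (\<lambda>k. a k - ltilde b k)"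
  have dl: "is_lpoly d" unfolding d_def using a b by (intro is_lpoly_diff is_lpoly_tilde)
  have "\<forall>z. z \<noteq> 0 \<longrightarrow> leval d z = 0"
    unfolding d_def using a b eqab by (simp add: leval_diff is_lpoly_tilde)
  then have d0: "d k = 0" for k using lpoly_unique0[OF dl] by blast
  have ak: "a k = 0" if "k \<noteq> 0" for k
  proof (cases "k < 0")
    case True then show ?thesis using a by (simp add: in_Pplus_def)
  next
    case False
    then have "b (-k) = 0" using b that by (simp add: in_Pplus_def)
    then show ?thesis using d0[of k] by (simp add: d_def ltilde_def)
  qed
  have "leval a z = a 0" for z
    by (subst leval_superset[where A="{0}"]) (use ak in \<open>auto simp: lsupp_def\<close>)
  then show ?thesis using ea by metis
qed

end
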